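(* Let $W$ be a finite set with $w\ge 1$ elements and let $\mathcal G=\{G_1,\dots,G_h\}$ be a family of nonempty subsets of $W$. For $k\in\{0,1,\dots,w\}$ let $\tau_k$ be the number of $k$-element transversals of $\mathcal G$ and $q_k=\tau_k/\binom{w}{k}$. Draw elements of $W$ independently and uniformly at random with replacement, and let $T$ be the smallest $n$ such that the set of elements drawn in the first $n$ draws is a transversal of $\mathcal G$. Then $$\mathbb E[T]=w\sum_{k=0}^{w-1}\frac{1-q_k}{w-k}=w\Big(H(w)-\sum_{k=1}^{w-1}\frac{q_k}{w-k}\Big)=wH(w)-\sum_{k=1}^{w-1}\frac{\tau_k}{\binom{w-1}{k}},$$ where $H(w)=1+\frac12+\cdots+\frac1w$.
   Context: A set $X\subseteq W$ is a transversal of $\mathcal G$ if $X\cap G_i\neq\emptyset$ for all $i\in\{1,\dots,h\}$. Note $q_k$ equals the probability that $k$ elements drawn uniformly at random without replacement from $W$ form a transversal; $q_0=0$ and $q_w=1$. *)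

theory Defs
  imports "HOL-Probability.Probability"
begin

definition is_transversal :: "'a set \<Rightarrow> (nat \<Rightarrow> 'a set) \<Rightarrow> nat \<Rightarrow> 'a set \<Rightarrow> bool" where
  "is_transversal W G h X \<longleftrightarrow> X \<subseteq> W \<and> (\<forall>i\<in>{1..h}. X \<inter> G i \<noteq> {})"

definition tau :: "'a set \<Rightarrow> (nat \<Rightarrow> 'a set) \<Rightarrow> nat \<Rightarrow> nat \<Rightarrow> nat" where
  "tau W G h k = card {X. is_transversal W G h X \<and> card X = k}"

definition qprob :: "'a set \<Rightarrow> (nat \<Rightarrow> 'a set) \<Rightarrow> nat \<Rightarrow> nat \<Rightarrow> real" where
  "qprob W G h k = real (tau W G h k) / real (card W choose k)"

definition draws :: "'a set \<Rightarrow> 'a stream measure" where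
  "draws W = stream_space (measure_pmf (pmf_of_set W))"

definition hitting_time :: "'a set \<Rightarrow> (nat \<Rightarrow> 'a set) \<Rightarrow> nat \<Rightarrow> 'a stream \<Rightarrow> ennreal" where
  "hitting_time W G h \<omega> =
     (if \<exists>n. is_transversal W G h (set (stake n \<omega>))
      then of_nat (LEAST n. is_transversal W G h (set (stake n \<omega>)))
      else \<infinity>)"

end

theory Submission
  imports Defs
begin


fun pp :: "nat \<Rightarrow> nat \<Rightarrow> nat \<Rightarrow> real" where
  "pp w 0 k = (if k = 0 then 1 else 0)"
| "pp w (Suc n) k = real k / real w * (pp w n k + pp w n (k - 1))"

fun AA :: "nat \<Rightarrow> nat \<Rightarrow> real" where
  "AA w 0 = 1"
| "AA w (Suc k) = real (Suc k) * AA w k / real (w - Suc k)"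

lemma pp_nonneg: "0 \<le> pp w n k"
  by (induction n arbitrary: k) auto

lemma AA_nonneg: "0 \<le> AA w k"
  by (induction k) auto

lemma psum_rec: "(\<Sum>n<Suc N. pp w n k) = (if k = 0 then 1 else 0)
   + real k / real w * ((\<Sum>n<N. pp w n k) + (\<Sum>n<N. pp w n (k - 1)))"
proof -
  have "(\<Sum>n<Suc N. pp w n k) = pp w 0 k + (\<Sum>n<N. pp w (Suc n) k)" by (rule sum.lessThan_Suc_shift)
  also have "(\<Sum>n<N. pp w (Suc n) k) = real k / real w * (\<Sum>n<N. pp w n k + pp w n (k-1))"
    by (simp add: sum_distrib_left)
  finally show ?thesis by (simp add: sum.distrib)
qed

lemma psum_mono: "(\<Sum>n<N. pp w n k) \<le> (\<Sum>n<Suc N. pp w n k)"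
  using pp_nonneg[of w N k] by simp

lemma psum_bound: "k < w \<Longrightarrow> (\<Sum>n<N. pp w n k) \<le> AA w k"
proof (induction k arbitrary: N)
  case 0
  show ?case
  proof (cases N)
    case 0 then show ?thesis by simp
  next
    case (Suc M) then show ?thesis using psum_rec[where N=M and k=0] by (simp del: sum.lessThan_Suc)
  qed
next
  case (Suc k)
  show ?case
  proof (cases N)
    case 0 then show ?thesis using AA_nonneg[of w "Suc k"] by simp
  next
    case (Suc M)
    let ?s = "\<Sum>n<Suc M. pp w n (Suc k)"
    have IH: "(\<Sum>n<M. pp w n k) \<le> AA w k" using Suc.IH Suc.prems by simp
    have wpos: "real w > 0" using Suc.prems by simp
    have "?s = real (Suc k) / real w * ((\<Sum>n<M. pp w n (Suc k)) + (\<Sum>n<M. pp w n k))"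
      using psum_rec[where N=M and k="Suc k"] by simp
    also have "\<dots> \<le> real (Suc k) / real w * (?s + AA w k)"
      by (intro mult_left_mono add_mono psum_mono IH) auto
    finally have "real w * ?s \<le> real (Suc k) * (?s + AA w k)"
      using wpos by (simp add: field_simps)
    then have "real (w - Suc k) * ?s \<le> real (Suc k) * AA w k"
      using Suc.prems by (simp add: of_nat_diff algebra_simps)
    then have "?s \<le> real (Suc k) * AA w k / real (w - Suc k)"
      using Suc.prems by (simp add: pos_le_divide_eq mult.commute)
    then show ?thesis using Suc by simp
  qed
qed

lemma pp_summable: "k < w \<Longrightarrow> summable (\<lambda>n. pp w n k)"
  by (rule summableI_nonneg_bounded[where x="AA w k"]) (auto simp: pp_nonneg psum_bound)

lemma pp_sums: "k < w \<Longrightarrow> (\<lambda>n. pp w n k) sums AA w k"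
proof (induction k)
  case 0
  have s: "(\<lambda>n. pp w n 0) sums 1"
  proof -
    have "(\<lambda>n. pp w n 0) sums (\<Sum>n\<in>{0}. pp w n 0)"
      by (rule sums_finite) (auto elim: pp.elims simp: gr0_conv_Suc)
    then show ?thesis by simp
  qed
  then show ?case by simp
next
  case (Suc k)
  define L where "L = suminf (\<lambda>n. pp w n (Suc k))"
  have L: "(\<lambda>n. pp w n (Suc k)) sums L"
    using pp_summable[OF Suc.prems] unfolding L_def by (rule summable_sums)
  have IH: "(\<lambda>n. pp w n k) sums AA w k" using Suc by simp
  have "(\<lambda>n. pp w (Suc n) (Suc k)) sums (real (Suc k) / real w * (L + AA w k))"
    unfolding pp.simps by (intro sums_mult sums_add) (use L IH in simp_all)
  moreover have "(\<lambda>n. pp w (Suc n) (Suc k)) sums (L - pp w 0 (Suc k))"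
    using L by (subst sums_Suc_iff) simp
  ultimately have eq: "L = real (Suc k) / real w * (L + AA w k)"
    using sums_unique2 by fastforce
  have wpos: "real w > 0" using Suc.prems by simp
  from eq have "real w * L = real (Suc k) * (L + AA w k)"
    using wpos by (simp add: field_simps)
  then have "real (w - Suc k) * L = real (Suc k) * AA w k"
    using Suc.prems by (simp add: of_nat_diff algebra_simps)
  then have "L = real (Suc k) * AA w k / real (w - Suc k)"
    using Suc.prems by (simp add: eq_divide_eq mult.commute)
  then show ?case using L by simp
qed

lemma AA_closed: "k < w \<Longrightarrow> AA w k * real (w - k) * real (w choose k) = real w"
proof (induction k)
  case 0 then show ?case by simp
next
  case (Suc k)
  have b: "real (Suc k) * real (w choose Suc k) = real (w - k) * real (w choose k)"
    using binomial_absorption[of k w] binomial_absorb_comp[of w k]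
    by (metis of_nat_mult)
  have "AA w (Suc k) * real (w - Suc k) = real (Suc k) * AA w k"
    using Suc.prems by simp
  then have "AA w (Suc k) * real (w - Suc k) * real (w choose Suc k)
     = AA w k * (real (Suc k) * real (w choose Suc k))" by simp
  also have "\<dots> = AA w k * real (w - k) * real (w choose k)" using b by simp
  also have "\<dots> = real w" using Suc by simp
  finally show ?case .
qed




lemma draws_prob: "prob_space (draws W)"
  unfolding draws_def by (rule prob_space.prob_space_stream_space[OF prob_space_measure_pmf])

lemma meas_code:
  fixes c :: "'a \<Rightarrow> 'b::countable" and f :: "'b list \<Rightarrow> ennreal"
  shows "(\<lambda>\<omega>. f (stake m (smap c \<omega>))) \<in> borel_measurable (draws W)"
proof -
  have c: "c \<in> measurable (measure_pmf (pmf_of_set W)) (count_space UNIV)"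
    by simp
  have "smap c \<in> measurable (draws W) (stream_space (count_space UNIV))"
    unfolding draws_def by (rule measurable_smap[OF c])
  then have "(\<lambda>\<omega>. stake m (smap c \<omega>)) \<in> measurable (draws W) (count_space UNIV)"
    by (rule measurable_compose) (rule measurable_stake)
  then show ?thesis by (rule measurable_compose) simp
qed

definition LL :: "'a set \<Rightarrow> nat \<Rightarrow> 'a list set" where
  "LL W n = {xs. set xs \<subseteq> W \<and> length xs = n}"

lemma LL_finite: "finite W \<Longrightarrow> finite (LL W n)"
  unfolding LL_def by (rule finite_lists_length_eq)

lemma sum_LL_Suc:
  assumes "finite W"
  shows "(\<Sum>xs\<in>LL W (Suc n). g xs) = (\<Sum>x\<in>W. \<Sum>xs\<in>LL W n. g (x # xs))"
proof -
  have "(\<Sum>xs\<in>LL W (Suc n). g xs) = (\<Sum>p\<in>LL W n \<times> W. g (snd p # fst p))"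
    unfolding LL_def lists_length_Suc_eq
    by (subst sum.reindex) (auto simp: inj_split_Cons intro!: sum.cong)
  also have "\<dots> = (\<Sum>xs\<in>LL W n. \<Sum>x\<in>W. g (x # xs))"
    by (simp add: sum.cartesian_product split_def)
  also have "\<dots> = (\<Sum>x\<in>W. \<Sum>xs\<in>LL W n. g (x # xs))"
    by (rule sum.swap)
  finally show ?thesis .
qed

lemma stake_integral:
  assumes fin: "finite W" and ne: "W \<noteq> {}"
  and nn: "\<And>xs. 0 \<le> F xs"
  and meas: "\<And>ys m. (\<lambda>\<omega>. ennreal (F (ys @ stake m \<omega>))) \<in> borel_measurable (draws W)"
  shows "(\<integral>\<^sup>+\<omega>. ennreal (F (ys @ stake n \<omega>)) \<partial>draws W)
     = ennreal ((\<Sum>xs\<in>LL W n. F (ys @ xs)) / real (card W) ^ n)"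
proof (induction n arbitrary: ys)
  case 0
  interpret prob_space "draws W" by (rule draws_prob)
  have "LL W 0 = {[]}" unfolding LL_def by auto
  then show ?case by (simp add: emeasure_space_1)
next
  case (Suc n)
  have wpos: "real (card W) > 0" using fin ne by (simp add: card_gt_0_iff)
  have "(\<integral>\<^sup>+\<omega>. ennreal (F (ys @ stake (Suc n) \<omega>)) \<partial>draws W)
     = (\<integral>\<^sup>+x. (\<integral>\<^sup>+\<omega>. ennreal (F (ys @ stake (Suc n) (x ## \<omega>))) \<partial>draws W) \<partial>measure_pmf (pmf_of_set W))"
    using meas[of ys "Suc n"] unfolding draws_def
    by (rule prob_space.nn_integral_stream_space[OF prob_space_measure_pmf])
  also have "\<dots> = (\<integral>\<^sup>+x. ennreal ((\<Sum>xs\<in>LL W n. F ((ys @ [x]) @ xs)) / real (card W) ^ n) \<partial>measure_pmf (pmf_of_set W))"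
  proof (intro nn_integral_cong)
    fix x
    show "(\<integral>\<^sup>+\<omega>. ennreal (F (ys @ stake (Suc n) (x ## \<omega>))) \<partial>draws W) = ennreal ((\<Sum>xs\<in>LL W n. F ((ys @ [x]) @ xs)) / real (card W) ^ n)"
      using Suc.IH[of "ys @ [x]"] by simp
  qed
  also have "\<dots> = (\<Sum>x\<in>W. ennreal ((\<Sum>xs\<in>LL W n. F ((ys @ [x]) @ xs)) / real (card W) ^ n)) / of_nat (card W)"
    by (rule nn_integral_pmf_of_set[OF ne fin])
  also have "\<dots> = ennreal ((\<Sum>x\<in>W. (\<Sum>xs\<in>LL W n. F ((ys @ [x]) @ xs)) / real (card W) ^ n) / real (card W))"
    by (subst sum_ennreal) (auto simp: nn sum_nonneg ennreal_of_nat_eq_real_of_nat intro!: divide_ennreal wpos)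
  also have "(\<Sum>x\<in>W. (\<Sum>xs\<in>LL W n. F ((ys @ [x]) @ xs)) / real (card W) ^ n) / real (card W)
      = (\<Sum>xs\<in>LL W (Suc n). F (ys @ xs)) / real (card W) ^ Suc n"
    by (simp add: sum_LL_Suc[OF fin] sum_divide_distrib[symmetric])
  finally show ?case .
qed




definition NN :: "'a set \<Rightarrow> nat \<Rightarrow> 'a set \<Rightarrow> real" where
  "NN W n S = (\<Sum>xs\<in>LL W n. if set xs = S then 1 else 0)"

lemma NN_eq:
  assumes fin: "finite W" and ne: "W \<noteq> {}"
  shows "S \<subseteq> W \<Longrightarrow> NN W n S = pp (card W) n (card S) * real (card W) ^ n"
proof (induction n arbitrary: S)
  case 0
  have "LL W 0 = {[]}" unfolding LL_def by auto
  moreover have "finite S" using 0 fin finite_subset by blast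
  ultimately show ?case by (auto simp: NN_def)
next
  case (Suc n)
  have finS: "finite S" using Suc.prems fin finite_subset by blast
  have wpos: "real (card W) > 0" using fin ne by (simp add: card_gt_0_iff)
  have pt: "\<And>x T. (if insert x T = S then 1 else 0 :: real)
      = (if x \<in> S then (if T = S then 1 else 0) + (if T = S - {x} then 1 else 0) else 0)"
    by auto
  have "NN W (Suc n) S = (\<Sum>x\<in>W. \<Sum>xs\<in>LL W n. if insert x (set xs) = S then 1 else 0)"
    unfolding NN_def by (simp add: sum_LL_Suc[OF fin])
  also have "\<dots> = (\<Sum>x\<in>W. if x \<in> S then NN W n S + NN W n (S - {x}) else 0)"
    unfolding pt NN_def by (auto intro!: sum.cong simp: sum.distrib)
  also have "\<dots> = (\<Sum>x\<in>S. NN W n S + NN W n (S - {x}))"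
    using Suc.prems sum.inter_restrict[OF fin, of "\<lambda>x. NN W n S + NN W n (S - {x})" S]
    by (simp add: Int_absorb1)
  also have "\<dots> = (\<Sum>x\<in>S. (pp (card W) n (card S) + pp (card W) n (card S - 1)) * real (card W) ^ n)"
  proof (intro sum.cong refl)
    fix x assume x: "x \<in> S"
    have "NN W n (S - {x}) = pp (card W) n (card (S - {x})) * real (card W) ^ n"
      using Suc.prems by (intro Suc.IH) auto
    then show "NN W n S + NN W n (S - {x}) = (pp (card W) n (card S) + pp (card W) n (card S - 1)) * real (card W) ^ n"
      using Suc.prems Suc.IH finS x by (simp add: algebra_simps card_Diff_singleton)
  qed
  also have "\<dots> = pp (card W) (Suc n) (card S) * real (card W) ^ Suc n"
    using wpos by simp
  finally show ?case .
qed




lemma trans_mono: "is_transversal W G h X \<Longrightarrow> X \<subseteq> Y \<Longrightarrow> Y \<subseteq> W \<Longrightarrow> is_transversal W G h Y"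
  unfolding is_transversal_def by blast

definition Fn :: "'a set \<Rightarrow> (nat \<Rightarrow> 'a set) \<Rightarrow> nat \<Rightarrow> nat \<Rightarrow> 'a list \<Rightarrow> real" where
  "Fn W G h n xs = (if \<forall>m\<le>n. \<not> is_transversal W G h (set (take m xs)) then 1 else 0)"

lemma Fn_LL: "xs \<in> LL W n \<Longrightarrow> Fn W G h n xs = (if is_transversal W G h (set xs) then 0 else 1)"
proof -
  assume xs: "xs \<in> LL W n"
  then have sub: "set xs \<subseteq> W" and len: "length xs = n" unfolding LL_def by auto
  show ?thesis
  proof (cases "is_transversal W G h (set xs)")
    case True
    then have "\<not> (\<forall>m\<le>n. \<not> is_transversal W G h (set (take m xs)))"
      using len by (metis order_refl take_all)
    then show ?thesis using True unfolding Fn_def by simp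
  next
    case False
    have "\<forall>m\<le>n. \<not> is_transversal W G h (set (take m xs))"
      using False trans_mono[OF _ set_take_subset sub] by blast
    then show ?thesis using False unfolding Fn_def by simp
  qed
qed

definition NT :: "'a set \<Rightarrow> (nat \<Rightarrow> 'a set) \<Rightarrow> nat \<Rightarrow> 'a set set" where
  "NT W G h = {S. S \<subseteq> W \<and> \<not> is_transversal W G h S}"

lemma NT_finite: "finite W \<Longrightarrow> finite (NT W G h)"
  unfolding NT_def by (rule finite_subset[of _ "Pow W"]) auto

lemma sum_Fn:
  assumes fin: "finite W"
  shows "(\<Sum>xs\<in>LL W n. Fn W G h n xs) = (\<Sum>S\<in>NT W G h. NN W n S)"
proof -
  have "(\<Sum>xs\<in>LL W n. Fn W G h n xs) = (\<Sum>xs\<in>LL W n. \<Sum>S\<in>NT W G h. if set xs = S then 1 else 0)"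
  proof (intro sum.cong refl)
    fix xs assume xs: "xs \<in> LL W n"
    then have "set xs \<subseteq> W" unfolding LL_def by auto
    then show "Fn W G h n xs = (\<Sum>S\<in>NT W G h. if set xs = S then 1 else 0)"
      using Fn_LL[OF xs] by (simp only: sum.delta'[OF NT_finite[OF fin]]) (simp add: NT_def)
  qed
  also have "\<dots> = (\<Sum>S\<in>NT W G h. NN W n S)"
    unfolding NN_def by (rule sum.swap)
  finally show ?thesis .
qed

definition code :: "'a set \<Rightarrow> (nat \<Rightarrow> 'a set) \<Rightarrow> nat \<Rightarrow> 'a \<Rightarrow> bool \<times> nat list" where
  "code W G h x = (x \<in> W, filter (\<lambda>i. x \<in> G i) [1..<Suc h])"

definition TRc :: "nat \<Rightarrow> (bool \<times> nat list) list \<Rightarrow> bool" where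
  "TRc h zs = ((\<forall>z\<in>set zs. fst z) \<and> (\<forall>i\<in>{1..h}. \<exists>z\<in>set zs. i \<in> set (snd z)))"

lemma set_code: "set (snd (code W G h x)) = {i. 1 \<le> i \<and> i \<le> h \<and> x \<in> G i}"
  unfolding code_def by (auto simp only: snd_conv set_filter set_upt atLeastLessThan_iff)

lemma trans_code: "is_transversal W G h (set xs) = TRc h (map (code W G h) xs)"
  unfolding is_transversal_def TRc_def
  by (auto simp: set_code) (auto simp: code_def)

definition Hn :: "nat \<Rightarrow> nat \<Rightarrow> (bool \<times> nat list) list \<Rightarrow> real" where
  "Hn h n zs = (if \<forall>m\<le>n. \<not> TRc h (take m zs) then 1 else 0)"

lemma Fn_code: "Fn W G h n xs = Hn h n (map (code W G h) xs)"
  unfolding Fn_def Hn_def by (simp add: trans_code take_map)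

lemma Fn_meas: "(\<lambda>\<omega>. ennreal (Fn W G h n (ys @ stake m \<omega>))) \<in> borel_measurable (draws W)"
proof -
  have "(\<lambda>\<omega>. ennreal (Fn W G h n (ys @ stake m \<omega>)))
      = (\<lambda>\<omega>. (\<lambda>zs. ennreal (Hn h n (map (code W G h) ys @ zs))) (stake m (smap (code W G h) \<omega>)))"
    by (simp add: Fn_code)
  then show ?thesis by (simp only:) (rule meas_code)
qed

lemma Fn_nonneg: "0 \<le> Fn W G h n xs"
  by (simp add: Fn_def)

lemma term_integral:
  assumes fin: "finite W" and ne: "W \<noteq> {}"
  shows "(\<integral>\<^sup>+\<omega>. ennreal (Fn W G h n (stake n \<omega>)) \<partial>draws W)
     = ennreal (\<Sum>S\<in>NT W G h. pp (card W) n (card S))"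
proof -
  have wpos: "real (card W) > 0" using fin ne by (simp add: card_gt_0_iff)
  have "(\<integral>\<^sup>+\<omega>. ennreal (Fn W G h n ([] @ stake n \<omega>)) \<partial>draws W)
     = ennreal ((\<Sum>xs\<in>LL W n. Fn W G h n ([] @ xs)) / real (card W) ^ n)"
    by (rule stake_integral[OF fin ne Fn_nonneg Fn_meas])
  also have "(\<Sum>xs\<in>LL W n. Fn W G h n ([] @ xs)) / real (card W) ^ n
     = (\<Sum>S\<in>NT W G h. pp (card W) n (card S))"
  proof -
    have "(\<Sum>xs\<in>LL W n. Fn W G h n ([] @ xs)) = (\<Sum>S\<in>NT W G h. NN W n S)"
      using sum_Fn[OF fin] by simp
    also have "\<dots> = (\<Sum>S\<in>NT W G h. pp (card W) n (card S) * real (card W) ^ n)"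
      by (rule sum.cong) (auto simp: NT_def NN_eq[OF fin ne])
    finally show ?thesis using wpos by (simp add: sum_divide_distrib)
  qed
  finally show ?thesis by simp
qed

lemma hitting_sum:
  "hitting_time W G h \<omega> = (\<Sum>n. ennreal (Fn W G h n (stake n \<omega>)))"
proof -
  have F: "Fn W G h n (stake n \<omega>) = (if \<forall>m\<le>n. \<not> is_transversal W G h (set (stake m \<omega>)) then 1 else 0)" for n
    unfolding Fn_def by (simp add: take_stake min_absorb1 cong: all_cong)
  show ?thesis
  proof (cases "\<exists>n. is_transversal W G h (set (stake n \<omega>))")
    case True
    define L where "L = (LEAST n. is_transversal W G h (set (stake n \<omega>)))"
    have L: "is_transversal W G h (set (stake L \<omega>))" unfolding L_def by (rule LeastI_ex[OF True])
    have iff: "(\<forall>m\<le>n. \<not> is_transversal W G h (set (stake m \<omega>))) \<longleftrightarrow> n < L" for n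
    proof
      assume a: "\<forall>m\<le>n. \<not> is_transversal W G h (set (stake m \<omega>))"
      show "n < L"
      proof (rule ccontr)
        assume "\<not> n < L"
        then have "L \<le> n" by simp
        then show False using a L by blast
      qed
    next
      assume "n < L"
      then show "\<forall>m\<le>n. \<not> is_transversal W G h (set (stake m \<omega>))"
        using not_less_Least[of _ "\<lambda>n. is_transversal W G h (set (stake n \<omega>))"]
        unfolding L_def[symmetric] by (meson le_less_trans)
    qed
    have "(\<Sum>n. ennreal (Fn W G h n (stake n \<omega>))) = (\<Sum>n\<in>{..<L}. ennreal (Fn W G h n (stake n \<omega>)))"
    proof (rule suminf_finite)
      fix n assume "n \<notin> {..<L}"
      then show "ennreal (Fn W G h n (stake n \<omega>)) = 0" unfolding F using iff[of n] by simp
    qed simp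
    also have "\<dots> = (\<Sum>n\<in>{..<L}. 1)"
      by (rule sum.cong) (auto simp: F iff)
    also have "\<dots> = of_nat L" by simp
    finally have "(\<Sum>n. ennreal (Fn W G h n (stake n \<omega>))) = of_nat L" .
    moreover have "hitting_time W G h \<omega> = of_nat L"
      unfolding hitting_time_def L_def by (rule if_P[OF True])
    ultimately show ?thesis by simp
  next
    case False
    then have "(\<lambda>n. ennreal (Fn W G h n (stake n \<omega>))) = (\<lambda>n. ennreal 1)" by (simp add: F)
    moreover have "(\<Sum>n. ennreal (1::real)) = top"
      by (rule summable_iff_suminf_neq_top) (auto simp: summable_const_iff)
    moreover have "hitting_time W G h \<omega> = top"
      unfolding hitting_time_def by (simp only: if_not_P[OF False] infinity_ennreal_def)
    ultimately show ?thesis by simp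
  qed
qed




lemma W_trans: "\<forall>i\<in>{1..h}. G i \<noteq> {} \<and> G i \<subseteq> W \<Longrightarrow> is_transversal W G h W"
  unfolding is_transversal_def by auto

lemma NT_card: 
  assumes fin: "finite W" and G: "\<forall>i\<in>{1..h}. G i \<noteq> {} \<and> G i \<subseteq> W" and S: "S \<in> NT W G h"
  shows "card S < card W"
proof -
  have "S \<subseteq> W" "S \<noteq> W" using S W_trans[OF G] unfolding NT_def by auto
  then show ?thesis using fin by (simp add: psubset_card_mono)
qed

lemma integral_part:
  assumes fin: "finite W" and ne: "W \<noteq> {}" and G: "\<forall>i\<in>{1..h}. G i \<noteq> {} \<and> G i \<subseteq> W"
  shows "(\<integral>\<^sup>+\<omega>. hitting_time W G h \<omega> \<partial>draws W) = ennreal (\<Sum>S\<in>NT W G h. AA (card W) (card S))"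
proof -
  have sums: "(\<lambda>n. \<Sum>S\<in>NT W G h. pp (card W) n (card S)) sums (\<Sum>S\<in>NT W G h. AA (card W) (card S))"
    by (rule sums_sum) (rule pp_sums[OF NT_card[OF fin G]])
  have "(\<integral>\<^sup>+\<omega>. hitting_time W G h \<omega> \<partial>draws W)
      = (\<integral>\<^sup>+\<omega>. (\<Sum>n. ennreal (Fn W G h n (stake n \<omega>))) \<partial>draws W)"
    by (simp only: hitting_sum)
  also have "\<dots> = (\<Sum>n. \<integral>\<^sup>+\<omega>. ennreal (Fn W G h n (stake n \<omega>)) \<partial>draws W)"
  proof (rule nn_integral_suminf)
    fix n
    show "(\<lambda>\<omega>. ennreal (Fn W G h n (stake n \<omega>))) \<in> borel_measurable (draws W)"
      using Fn_meas[of W G h n "[]" n] by simp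
  qed
  also have "\<dots> = (\<Sum>n. ennreal (\<Sum>S\<in>NT W G h. pp (card W) n (card S)))"
    by (simp only: term_integral[OF fin ne])
  also have "\<dots> = ennreal (\<Sum>n. \<Sum>S\<in>NT W G h. pp (card W) n (card S))"
    by (rule suminf_ennreal2) (auto intro: sum_nonneg pp_nonneg sums_summable[OF sums])
  also have "(\<Sum>n. \<Sum>S\<in>NT W G h. pp (card W) n (card S)) = (\<Sum>S\<in>NT W G h. AA (card W) (card S))"
    using sums by (rule sums_unique[symmetric])
  finally show ?thesis .
qed

lemma tau_le: "finite W \<Longrightarrow> tau W G h k \<le> card W choose k"
proof -
  assume fin: "finite W"
  have "{X. is_transversal W G h X \<and> card X = k} \<subseteq> {B. B \<subseteq> W \<and> card B = k}"
    unfolding is_transversal_def by auto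
  then show ?thesis unfolding tau_def n_subsets[OF fin, symmetric]
    by (rule card_mono[rotated]) (use fin in auto)
qed

lemma card_NT_k:
  assumes fin: "finite W"
  shows "real (card {S \<in> NT W G h. card S = k}) = real (card W choose k) - real (tau W G h k)"
proof -
  have un: "{B. B \<subseteq> W \<and> card B = k} = {S \<in> NT W G h. card S = k} \<union> {X. is_transversal W G h X \<and> card X = k}"
    unfolding NT_def is_transversal_def by auto
  have f1: "finite {S \<in> NT W G h. card S = k}" using NT_finite[OF fin] by simp
  have f2: "finite {X. is_transversal W G h X \<and> card X = k}"
    by (rule finite_subset[of _ "Pow W"]) (use fin in \<open>auto simp: is_transversal_def\<close>)
  have "card W choose k = card {S \<in> NT W G h. card S = k} + tau W G h k"
    unfolding n_subsets[OF fin, symmetric] un tau_def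
    by (rule card_Un_disjoint[OF f1 f2]) (auto simp: NT_def)
  then show ?thesis by simp
qed

lemma algebra_part:
  assumes fin: "finite W" and G: "\<forall>i\<in>{1..h}. G i \<noteq> {} \<and> G i \<subseteq> W"
  shows "(\<Sum>S\<in>NT W G h. AA (card W) (card S))
     = real (card W) * (\<Sum>k<card W. (1 - qprob W G h k) / real (card W - k))"
proof -
  let ?w = "card W"
  have "(\<Sum>S\<in>NT W G h. AA ?w (card S)) = (\<Sum>k<?w. \<Sum>S\<in>{S \<in> NT W G h. card S = k}. AA ?w (card S))"
    by (rule sum.group[symmetric]) (use NT_finite[OF fin] NT_card[OF fin G] in auto)
  also have "\<dots> = (\<Sum>k<?w. real (card {S \<in> NT W G h. card S = k}) * AA ?w k)"
    by (intro sum.cong refl) simp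
  also have "\<dots> = (\<Sum>k<?w. real ?w * ((1 - qprob W G h k) / real (?w - k)))"
  proof (intro sum.cong refl)
    fix k assume k: "k \<in> {..<?w}"
    have C: "real (?w choose k) > 0" using k by simp
    have wk: "real (?w - k) > 0" using k by simp
    have cl: "AA ?w k * real (?w - k) * real (?w choose k) = real ?w" using AA_closed k by simp
    then have AA: "AA ?w k = real ?w / (real (?w - k) * real (?w choose k))"
      using C wk by (simp add: field_simps)
    show "real (card {S \<in> NT W G h. card S = k}) * AA ?w k = real ?w * ((1 - qprob W G h k) / real (?w - k))"
      unfolding card_NT_k[OF fin] AA qprob_def using C wk by (simp add: field_simps)
  qed
  also have "\<dots> = real ?w * (\<Sum>k<?w. (1 - qprob W G h k) / real (?w - k))"
    by (simp add: sum_distrib_left)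
  finally show ?thesis .
qed

lemma harm_rev: "(\<Sum>k<n. 1 / real (n - k)) = harm n"
proof (induction n)
  case 0 then show ?case by (simp add: harm_def)
next
  case (Suc n)
  have "(\<Sum>k<Suc n. 1 / real (Suc n - k)) = 1 / real (Suc n) + (\<Sum>k<n. 1 / real (n - k))"
    by (subst sum.lessThan_Suc_shift) simp
  then show ?case using Suc by (simp add: harm_Suc field_simps)
qed

lemma tau0: "finite W \<Longrightarrow> h \<ge> 1 \<Longrightarrow> tau W G h 0 = 0"
  unfolding tau_def is_transversal_def
  by (auto simp: card_eq_0_iff intro!: Set.equalityI) (meson atLeastAtMost_iff finite_subset le_refl)


theorem theorem1:
  fixes W :: "'a set" and G :: "nat \<Rightarrow> 'a set" and h :: nat
  assumes "finite W" and "card W \<ge> 1"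
    and "h \<ge> 1"
    and "\<forall>i\<in>{1..h}. G i \<noteq> {} \<and> G i \<subseteq> W"
  defines "w \<equiv> card W"
  shows "(\<integral>\<^sup>+ \<omega>. hitting_time W G h \<omega> \<partial>draws W)
           = ennreal (real w * (\<Sum>k<w. (1 - qprob W G h k) / real (w - k)))
       \<and> real w * (\<Sum>k<w. (1 - qprob W G h k) / real (w - k))
           = real w * (harm w - (\<Sum>k=1..w-1. qprob W G h k / real (w - k)))
       \<and> real w * (harm w - (\<Sum>k=1..w-1. qprob W G h k / real (w - k)))
           = real w * harm w - (\<Sum>k=1..w-1. real (tau W G h k) / real (w - 1 choose k))"
proof (intro conjI)
  have fin: "finite W" by fact
  have ne: "W \<noteq> {}" using assms(2) by auto
  have G: "\<forall>i\<in>{1..h}. G i \<noteq> {} \<and> G i \<subseteq> W" by fact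
  show "(\<integral>\<^sup>+ \<omega>. hitting_time W G h \<omega> \<partial>draws W)
           = ennreal (real w * (\<Sum>k<w. (1 - qprob W G h k) / real (w - k)))"
    unfolding w_def integral_part[OF fin ne G] algebra_part[OF fin G] ..
  have q0: "qprob W G h 0 = 0" unfolding qprob_def using tau0[OF fin assms(3)] by simp
  have w1: "w \<ge> 1" using assms(2) w_def by simp
  have set: "{..<w} = insert 0 {1..w-1}" using w1 by auto
  have "(\<Sum>k<w. qprob W G h k / real (w - k)) = (\<Sum>k=1..w-1. qprob W G h k / real (w - k))"
    unfolding set by (simp add: q0)
  moreover have "(\<Sum>k<w. (1 - qprob W G h k) / real (w - k))
     = (\<Sum>k<w. 1 / real (w - k)) - (\<Sum>k<w. qprob W G h k / real (w - k))"
    by (simp add: diff_divide_distrib sum_subtractf)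
  moreover have "(\<Sum>k<w. 1 / real (w - k)) = harm w" by (rule harm_rev)
  ultimately show "real w * (\<Sum>k<w. (1 - qprob W G h k) / real (w - k))
           = real w * (harm w - (\<Sum>k=1..w-1. qprob W G h k / real (w - k)))"
    by metis
  have "real w * (\<Sum>k=1..w-1. qprob W G h k / real (w - k))
     = (\<Sum>k=1..w-1. real (tau W G h k) / real (w - 1 choose k))"
    unfolding sum_distrib_left
  proof (intro sum.cong refl)
    fix k assume k: "k \<in> {1..w-1}"
    have b: "real (w - k) * real (w choose k) = real w * real (w - 1 choose k)"
      using binomial_absorb_comp[of w k] by (metis of_nat_mult)
    have p1: "real (w - k) > 0" "real (w - 1 choose k) > 0" "real (w choose k) > 0"
      using k w1 by auto
    show "real w * (qprob W G h k / real (w - k)) = real (tau W G h k) / real (w - 1 choose k)"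
      unfolding qprob_def w_def[symmetric] using p1 b
      by (simp add: field_simps)
  qed
  then show "real w * (harm w - (\<Sum>k=1..w-1. qprob W G h k / real (w - k)))
           = real w * harm w - (\<Sum>k=1..w-1. real (tau W G h k) / real (w - 1 choose k))"
    by (simp add: right_diff_distrib)
qed

end
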